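(* For every positive integer $n$, as formal power series in $x$, $$\frac{\mathrm{ODP}(\mathrm{Tour}_n,\mathrm{Cycle}_n)}{(1-x)^n}=n\sum_{m=0}^{\infty}m^{n-1}x^m,$$ with the convention $0^0=1$.
   Context: $\mathrm{Tour}_n$ is the directed graph on $[n]$ with edges $i\to j$ for all $n\ge i>j\ge1$. For $n\ge2$, $\mathrm{Cycle}_n$ is the directed multigraph on $[n]$ with edges $i\to i+1$ ($1\le i\le n-1$) and $n\to1$; for $n=2$ its edges are $1\to2$ and $2\to1$. $\mathrm{Cycle}_1$ is a single vertex (loops are irrelevant). For directed graphs $X,Y$ with $|V(X)|=|V(Y)|$, $\mathrm{DFS}(X,Y)$ has as vertices the bijections $\sigma:V(X)\to V(Y)$. For each $\sigma$ and ordered pair $(a,b)$ of distinct vertices, it has $m_X(a,b)m_Y(\sigma(a),\sigma(b))$ edges from $\sigma$ to $\sigma\circ(a\,b)$, where $m_X(a,b)$ is the number of edges $a\to b$ in $X$. Thus $\mathrm{outdeg}(\sigma)=\sum_{a\ne b}m_X(a,b)m_Y(\sigma(a),\sigma(b))$ and $\mathrm{ODP}(X,Y)=\sum_\sigma x^{\mathrm{outdeg}(\sigma)}$. *)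

theory Defs
  imports "HOL-Combinatorics.Permutations" "HOL-Computational_Algebra.Formal_Power_Series"
begin

definition tour_mult :: "nat \<Rightarrow> nat \<Rightarrow> nat \<Rightarrow> nat" where
  "tour_mult n a b = (if b \<ge> 1 \<and> b < a \<and> a \<le> n then 1 else 0)"

text \<open>Edge multiplicity of Cycle_n (n >= 2): edges i -> i+1 (1 <= i <= n-1) and n -> 1.
  For n = 2 this gives edges 1 -> 2 and 2 -> 1. For n = 1 the only candidate is the loop 1 -> 1,
  which is irrelevant since only pairs of distinct vertices are counted.\<close>
definition cycle_mult :: "nat \<Rightarrow> nat \<Rightarrow> nat \<Rightarrow> nat" where
  "cycle_mult n a b =
     (if 1 \<le> a \<and> a + 1 \<le> n \<and> b = a + 1 then 1 else 0) + (if a = n \<and> b = 1 then 1 else 0)"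

text \<open>Out-degree of the vertex sigma in DFS(X,Y), for X, Y on vertex set [n].\<close>
definition dfs_outdeg :: "nat \<Rightarrow> (nat \<Rightarrow> nat \<Rightarrow> nat) \<Rightarrow> (nat \<Rightarrow> nat \<Rightarrow> nat) \<Rightarrow> (nat \<Rightarrow> nat) \<Rightarrow> nat" where
  "dfs_outdeg n mX mY \<sigma> = (\<Sum>a\<in>{1..n}. \<Sum>b\<in>{1..n} - {a}. mX a b * mY (\<sigma> a) (\<sigma> b))"

definition ODP :: "nat \<Rightarrow> (nat \<Rightarrow> nat \<Rightarrow> nat) \<Rightarrow> (nat \<Rightarrow> nat \<Rightarrow> nat) \<Rightarrow> real fps" where
  "ODP n mX mY = (\<Sum>\<sigma>\<in>{\<sigma>. \<sigma> permutes {1..n}}. fps_X ^ dfs_outdeg n mX mY \<sigma>)"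

end

theory Submission
  imports Defs "HOL-Combinatorics.Multiset_Permutations"
begin

fun des :: "nat list \<Rightarrow> nat" where
  "des (a # b # xs) = (if b < a then 1 else 0) + des (b # xs)"
| "des _ = 0"

lemma des_Cons: "des (a # zs) = (if zs \<noteq> [] \<and> hd zs < a then 1 else 0) + des zs"
  by (cases zs) auto

lemma des_snoc: "des (xs @ [b]) = des xs + (if xs \<noteq> [] \<and> b < last xs then 1 else 0)"
  by (induction xs) (auto simp: des_Cons)

lemma des_less: "xs \<noteq> [] \<Longrightarrow> des xs < length xs"
  by (induction xs rule: des.induct) auto

definition ins :: "nat \<Rightarrow> nat \<Rightarrow> nat list \<Rightarrow> nat list" where
  "ins M i xs = take i xs @ M # drop i xs"

lemma ins_sum:
  assumes "\<forall>x\<in>set xs. x < M"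
  shows "(\<Sum>i\<le>length xs. fps_X ^ des (ins M i xs) :: real fps)
     = of_nat (des xs + 1) * fps_X ^ des xs + of_nat (length xs - des xs) * fps_X ^ (des xs + 1)"
  using assms
proof (induction xs)
  case Nil
  then show ?case by (simp add: ins_def)
next
  case (Cons a ys)
  have aM: "a < M" using Cons.prems by auto
  show ?case
  proof (cases "ys = []")
    case True
    then show ?thesis using aM by (simp add: ins_def)
  next
    case False
    then obtain k'' where k: "length ys = Suc k''" by (cases ys) auto
    define e where "e = des ys"
    define c where "c = (if hd ys < a then 1 else 0::nat)"
    have el: "e < length ys" using des_less[OF False] by (simp add: e_def)
    then obtain r where r: "k'' = e + r" using k by (metis less_Suc_eq_le le_Suc_ex)
    define R where "R = (\<Sum>i\<le>k''. fps_X ^ des (ins M (Suc i) ys) :: real fps)"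
    have hdins: "ins M (Suc i) ys \<noteq> [] \<and> hd (ins M (Suc i) ys) = hd ys" for i
      using False by (cases ys) (auto simp: ins_def)
    have dM: "des (M # ys) = e + 1"
      using False Cons.prems by (cases ys) (auto simp: e_def)
    have IH: "(\<Sum>i\<le>length ys. fps_X ^ des (ins M i ys) :: real fps) = fps_X ^ (e+1) + R"
      unfolding k R_def by (subst sum.atMost_Suc_shift) (simp add: ins_def dM)
    have R_eq: "R = of_nat (e+1) * fps_X ^ e + of_nat r * fps_X ^ (e+1)"
    proof -
      have "fps_X ^ (e+1) + R = of_nat (e+1) * fps_X ^ e + of_nat (r+1) * fps_X ^ (e+1)"
        using Cons.IH Cons.prems IH k r by (simp add: e_def)
      then show ?thesis by (simp add: algebra_simps)
    qed
    have d: "des (a # ys) = c + e" using False by (simp add: des_Cons c_def e_def)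
    have "(\<Sum>i\<le>length (a # ys). fps_X ^ des (ins M i (a # ys)) :: real fps)
        = fps_X ^ des (M # a # ys) + fps_X ^ des (a # M # ys) + (\<Sum>i\<le>k''. fps_X ^ des (a # ins M (Suc i) ys))"
      unfolding length_Cons k by (subst sum.atMost_Suc_shift, subst sum.atMost_Suc_shift) (simp add: ins_def del: sum.atMost_Suc)
    also have "\<dots> = fps_X ^ (1 + c + e) + fps_X ^ (e + 1) + fps_X ^ c * R"
      unfolding R_def sum_distrib_left
      using hdins aM dM d by (simp add: des_Cons c_def power_add)
    finally have S: "(\<Sum>i\<le>length (a # ys). fps_X ^ des (ins M i (a # ys)) :: real fps) =
       fps_X ^ (1 + c + e) + fps_X ^ (e + 1) + fps_X ^ c * R" .
    show ?thesis
    proof (cases "hd ys < a")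
      case True
      then have c1: "c = 1" by (simp add: c_def)
      show ?thesis unfolding S d c1 R_eq using k r
        by (simp add: algebra_simps power_add) 
    next
      case False
      then have c1: "c = 0" by (simp add: c_def)
      show ?thesis unfolding S d c1 R_eq using k r
        by (simp add: algebra_simps power_add) 
    qed
  qed
qed

abbreviation P :: "nat \<Rightarrow> nat list set" where "P k \<equiv> permutations_of_set {1..k}"

lemma ins_bij: "bij_betw (\<lambda>(xs,i). ins (Suc k) i xs) (P k \<times> {..k}) (P (Suc k))"
proof (rule bij_betw_imageI)
  show "inj_on (\<lambda>(xs,i). ins (Suc k) i xs) (P k \<times> {..k})"
  proof (rule inj_onI)
    fix p q assume pP: "p \<in> P k \<times> {..k}" and qP: "q \<in> P k \<times> {..k}"
      and eq0: "(\<lambda>(xs,i). ins (Suc k) i xs) p = (\<lambda>(xs,i). ins (Suc k) i xs) q"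
    obtain xs i where p: "p = (xs, i)" by (cases p)
    obtain ys j where q: "q = (ys, j)" by (cases q)
    have xs: "xs \<in> P k" and i: "i \<in> {..k}" and ys: "ys \<in> P k" and j: "j \<in> {..k}"
      and eq: "ins (Suc k) i xs = ins (Suc k) j ys" using pP qP eq0 p q by auto
    have nx: "\<forall>x\<in>set xs. x \<noteq> Suc k" and ny: "\<forall>x\<in>set ys. x \<noteq> Suc k"
      using xs ys by (auto simp: permutations_of_set_def)
    have lx: "length xs = k" and ly: "length ys = k"
      using xs ys by (auto simp: length_finite_permutations_of_set)
    have f: "filter (\<lambda>x. x \<noteq> Suc k) (ins (Suc k) i zs) = zs" if "\<forall>x\<in>set zs. x \<noteq> Suc k" for i zs
    proof -
      have "\<forall>x\<in>set (take i zs). x \<noteq> Suc k" "\<forall>x\<in>set (drop i zs). x \<noteq> Suc k"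
        using that by (auto dest: in_set_takeD in_set_dropD)
      then have "filter (\<lambda>x. x \<noteq> Suc k) (ins (Suc k) i zs) = take i zs @ drop i zs"
        by (simp add: ins_def)
      then show ?thesis by simp
    qed
    have t: "takeWhile (\<lambda>x. x \<noteq> Suc k) (ins (Suc k) i zs) = take i zs" if "\<forall>x\<in>set zs. x \<noteq> Suc k" for i zs
      using that unfolding ins_def by (subst takeWhile_append2) (auto dest: in_set_takeD)
    have "xs = ys" using f[OF nx, of i] f[OF ny, of j] eq by simp
    moreover have "i = j"
    proof -
      have "take i xs = take j ys" using t[OF nx, of i] t[OF ny, of j] eq by simp
      then have "length (take i xs) = length (take j ys)" by simp
      then show ?thesis using i j lx ly by simp
    qed
    ultimately show "p = q" using p q by simp
  qed
next
  show "(\<lambda>(xs,i). ins (Suc k) i xs) ` (P k \<times> {..k}) = P (Suc k)"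
  proof
    show "(\<lambda>(xs,i). ins (Suc k) i xs) ` (P k \<times> {..k}) \<subseteq> P (Suc k)"
    proof
      fix w assume "w \<in> (\<lambda>(xs,i). ins (Suc k) i xs) ` (P k \<times> {..k})"
      then obtain xs i where xs: "xs \<in> P k" and i: "i \<in> {..k}" and w: "w = ins (Suc k) i xs" by auto
      have s: "set xs = {1..k}" "distinct xs" using xs by (auto simp: permutations_of_set_def)
      have "set (ins (Suc k) i xs) = insert (Suc k) (set (take i xs) \<union> set (drop i xs))"
        by (auto simp: ins_def)
      also have "\<dots> = insert (Suc k) (set xs)"
      proof -
        have "set (take i xs) \<union> set (drop i xs) = set xs" by (simp flip: set_append)
        then show ?thesis by simp
      qed
      finally have "set (ins (Suc k) i xs) = {1..Suc k}" using s by auto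
      moreover have "distinct (ins (Suc k) i xs)"
      proof -
        have "distinct (take i xs @ drop i xs)" using s by simp
        then have "distinct (take i xs)" "distinct (drop i xs)" "set (take i xs) \<inter> set (drop i xs) = {}"
          by (simp_all only: distinct_append) 
        moreover have "Suc k \<notin> set (take i xs)" "Suc k \<notin> set (drop i xs)"
          using s by (auto dest: in_set_takeD in_set_dropD)
        ultimately show ?thesis unfolding ins_def by simp
      qed
      ultimately show "w \<in> P (Suc k)" using w by auto
    qed
  next
    show "P (Suc k) \<subseteq> (\<lambda>(xs,i). ins (Suc k) i xs) ` (P k \<times> {..k})"
    proof
      fix w assume w: "w \<in> P (Suc k)"
      have s: "set w = {1..Suc k}" "distinct w" using w by (auto simp: permutations_of_set_def)
      then have "Suc k \<in> set w" by auto
      then obtain as bs where wab: "w = as @ Suc k # bs" by (meson split_list)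
      have d: "distinct (as @ bs)" and nin: "Suc k \<notin> set (as @ bs)" using s wab by auto
      have "set (as @ bs) = {1..k}"
      proof -
        have ins: "insert (Suc k) (set (as @ bs)) = {1..Suc k}" using s wab by auto
        have "set (as @ bs) = insert (Suc k) (set (as @ bs)) - {Suc k}" using nin by auto
        also have "\<dots> = {1..Suc k} - {Suc k}" using ins by simp
        also have "\<dots> = {1..k}" by auto
        finally show ?thesis .
      qed
      then have mem: "as @ bs \<in> P k" using d by auto
      have len: "length as \<le> k"
        using length_finite_permutations_of_set[OF mem] by simp
      have "w = ins (Suc k) (length as) (as @ bs)" using wab by (simp add: ins_def)
      then show "w \<in> (\<lambda>(xs,i). ins (Suc k) i xs) ` (P k \<times> {..k})"
        using mem len by force
    qed
  qed
qed

definition E :: "nat \<Rightarrow> real fps" where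
  "E k = (\<Sum>xs\<in>P k. fps_X ^ des xs)"

lemma term_id:
  assumes "d \<le> k"
  shows "of_nat (d+1) * fps_X ^ d + of_nat (k-d) * fps_X ^ (d+1)
    = (1 + of_nat k * fps_X) * fps_X ^ d + fps_X * (1 - fps_X) * fps_deriv (fps_X ^ d :: real fps)"
proof -
  obtain r where k: "k = d + r" using assms le_Suc_ex by blast
  show ?thesis
  proof (cases d)
    case 0
    then show ?thesis using k by (simp add: algebra_simps)
  next
    case (Suc d')
    show ?thesis unfolding k Suc fps_deriv_power'
      by (simp add: algebra_simps)
  qed
qed

lemma des_le: "xs \<in> P k \<Longrightarrow> des xs \<le> k"
  using des_less[of xs] length_finite_permutations_of_set[of xs "{1..k}"]
  by (cases xs) force+

lemma E_Suc: "E (Suc k) = (1 + of_nat k * fps_X) * E k + fps_X * (1 - fps_X) * fps_deriv (E k)"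
proof -
  have "E (Suc k) = (\<Sum>(xs,i)\<in>P k \<times> {..k}. fps_X ^ des (ins (Suc k) i xs))"
    unfolding E_def using sum.reindex_bij_betw[OF ins_bij[of k], of "\<lambda>w. fps_X ^ des w", symmetric]
    by (simp add: case_prod_unfold)
  also have "\<dots> = (\<Sum>xs\<in>P k. \<Sum>i\<le>k. fps_X ^ des (ins (Suc k) i xs))"
    by (subst sum.cartesian_product) simp
  also have "\<dots> = (\<Sum>xs\<in>P k. of_nat (des xs + 1) * fps_X ^ des xs + of_nat (k - des xs) * fps_X ^ (des xs + 1))"
  proof (rule sum.cong)
    fix xs assume xs: "xs \<in> P k"
    have "\<forall>x\<in>set xs. x < Suc k" using xs by (auto simp: permutations_of_set_def)
    moreover have "length xs = k" using xs length_finite_permutations_of_set by fastforce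
    ultimately show "(\<Sum>i\<le>k. fps_X ^ des (ins (Suc k) i xs)) = of_nat (des xs + 1) * fps_X ^ des xs + of_nat (k - des xs) * (fps_X ^ (des xs + 1) :: real fps)"
      using ins_sum[of xs "Suc k"] by simp
  qed simp
  also have "\<dots> = (\<Sum>xs\<in>P k. (1 + of_nat k * fps_X) * fps_X ^ des xs + fps_X * (1 - fps_X) * fps_deriv (fps_X ^ des xs))"
    by (rule sum.cong[OF refl], rule term_id, rule des_le)
  also have "\<dots> = (1 + of_nat k * fps_X) * E k + fps_X * (1 - fps_X) * fps_deriv (E k)"
    unfolding E_def fps_deriv_sum sum.distrib sum_distrib_left ..
  finally show ?thesis .
qed

definition S :: "nat \<Rightarrow> real fps" where
  "S k = Abs_fps (\<lambda>m. of_nat (m+1) ^ k)"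

lemma S_Suc: "S (Suc k) = fps_deriv (fps_X * S k)"
  by (rule fps_ext) (simp add: S_def distrib_right)

lemma S_0: "(1 - fps_X) * S 0 = 1"
  by (rule fps_ext) (simp add: S_def algebra_simps)

lemma E_eq: "E k = (1 - fps_X) ^ (k+1) * S k"
proof (induction k)
  case 0
  have "E 0 = 1" by (simp add: E_def)
  then show ?case using S_0 by simp
next
  case (Suc k)
  let ?Y = "1 - fps_X :: real fps"
  have dY: "fps_deriv ?Y = -1" by simp
  have dE: "fps_deriv (E k) = - of_nat (k+1) * ?Y ^ k * S k + ?Y ^ (k+1) * fps_deriv (S k)"
    unfolding Suc fps_deriv_mult fps_deriv_power' dY by (simp add: algebra_simps)
  show ?case unfolding E_Suc S_Suc dE unfolding Suc
    by (simp add: algebra_simps)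
qed


definition cdes :: "nat list \<Rightarrow> nat" where "cdes w = des (w @ [hd w])"

lemma des_snoc2: "des (xs @ [a, b]) = des (xs @ [a]) + (if b < a then 1 else 0)"
  using des_snoc[of "xs @ [a]" b] by simp

lemma cdes_rotate1: "cdes (rotate1 w) = cdes w"
proof (cases w)
  case Nil then show ?thesis by simp
next
  case (Cons a ys)
  show ?thesis
  proof (cases "ys = []")
    case True then show ?thesis using Cons by simp
  next
    case False
    have "cdes (rotate1 w) = des (ys @ [a, hd ys])" using Cons False by (simp add: cdes_def)
    also have "\<dots> = des (ys @ [a]) + (if hd ys < a then 1 else 0)" by (rule des_snoc2)
    also have "\<dots> = cdes w" using Cons False by (simp add: cdes_def des_Cons)
    finally show ?thesis .
  qed
qed

lemma cdes_rotate: "cdes (rotate j w) = cdes w"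
  by (induction j) (simp_all add: cdes_rotate1)

lemma cdes_head:
  assumes "w' \<in> P k" "k \<ge> 1"
  shows "cdes (Suc k # w') = des w' + 1"
proof -
  have ne: "w' \<noteq> []" using assms by (auto simp: permutations_of_set_def)
  have lt: "\<forall>x\<in>set w'. x < Suc k" using assms by (auto simp: permutations_of_set_def)
  have "cdes (Suc k # w') = des (Suc k # (w' @ [Suc k]))" by (simp add: cdes_def)
  also have "\<dots> = 1 + des (w' @ [Suc k])"
    using ne lt by (subst des_Cons) (simp add: hd_append)
  also have "\<dots> = 1 + des w'"
  proof -
    have "last w' < Suc k" using lt last_in_set[OF ne] by blast
    then show ?thesis using ne by (simp add: des_snoc)
  qed
  finally show ?thesis by simp
qed

lemma des_sum: "des xs = (\<Sum>i<length xs - 1. if xs ! Suc i < xs ! i then 1 else 0)"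
proof (induction xs rule: des.induct)
  case (1 a b xs)
  show ?case unfolding des.simps(1) 1
    by (simp add: sum.lessThan_Suc_shift del: sum.lessThan_Suc)
qed auto

lemma rotate_inj: "rotate j xs = rotate j ys \<Longrightarrow> xs = ys"
  by (induction j) (simp_all add: inj_eq[OF inj_rotate1])

lemma orbit:
  fixes f :: "nat list \<Rightarrow> real fps"
  assumes n: "n \<ge> 1" and rinv: "\<And>j w. f (rotate j w) = f w"
  shows "(\<Sum>w\<in>P n. f w) = of_nat n * (\<Sum>w\<in>P n. if hd w = n then f w else 0)"
proof -
  have rot_img: "rotate j ` P n = P n" for j
  proof (rule endo_inj_surj)
    show "rotate j ` P n \<subseteq> P n" by (auto simp: permutations_of_set_def)
    show "inj_on (rotate j) (P n)" by (auto intro: inj_onI rotate_inj)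
  qed simp
  have rot_inj: "inj_on (rotate j) (P n)" for j by (auto intro: inj_onI rotate_inj)
  have one: "(\<Sum>j<n. if hd (rotate j w) = n then f w else 0) = f w" if w: "w \<in> P n" for w
  proof -
    have sw: "set w = {1..n}" "distinct w" using w by (auto simp: permutations_of_set_def)
    have lw: "length w = n" using w length_finite_permutations_of_set by fastforce
    have "n \<in> set w" using sw n by auto
    then obtain p where p: "p < n" "w ! p = n" using lw by (auto simp: in_set_conv_nth)
    have "hd (rotate j w) = n \<longleftrightarrow> j = p" if "j < n" for j
    proof -
      have "hd (rotate j w) = w ! j" using that lw n by (subst hd_rotate_conv_nth) auto
      then show ?thesis using nth_eq_iff_index_eq[OF sw(2), of j p] that p lw by auto
    qed
    then have "(\<Sum>j<n. if hd (rotate j w) = n then f w else 0) = (\<Sum>j<n. if j = p then f w else 0)"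
      by (intro sum.cong) auto
    also have "\<dots> = f w" using p by simp
    finally show ?thesis .
  qed
  have "(\<Sum>w\<in>P n. f w) = (\<Sum>w\<in>P n. \<Sum>j<n. if hd (rotate j w) = n then f (rotate j w) else 0)"
  proof (rule sum.cong[OF refl])
    fix w assume "w \<in> P n"
    then show "f w = (\<Sum>j<n. if hd (rotate j w) = n then f (rotate j w) else 0)"
    proof -
      have "(\<Sum>j<n. if hd (rotate j w) = n then f (rotate j w) else 0) = (\<Sum>j<n. if hd (rotate j w) = n then f w else 0)"
        by (rule sum.cong[OF refl]) (simp only: rinv)
      then show ?thesis using one[OF \<open>w \<in> P n\<close>] by simp
    qed
  qed
  also have "\<dots> = (\<Sum>j<n. \<Sum>w\<in>P n. if hd (rotate j w) = n then f (rotate j w) else 0)"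
    by (rule sum.swap)
  also have "\<dots> = (\<Sum>j<n. \<Sum>w\<in>P n. if hd w = n then f w else 0)"
  proof (rule sum.cong[OF refl])
    fix j
    show "(\<Sum>w\<in>P n. if hd (rotate j w) = n then f (rotate j w) else 0) = (\<Sum>w\<in>P n. if hd w = n then f w else 0)"
      using sum.reindex[OF rot_inj[of j], of "\<lambda>w. if hd w = n then f w else 0"] rot_img[of j]
      by (simp add: o_def)
  qed
  also have "\<dots> = of_nat n * (\<Sum>w\<in>P n. if hd w = n then f w else 0)" by simp
  finally show ?thesis .
qed

lemma head_sum:
  fixes f :: "nat list \<Rightarrow> real fps"
  assumes n: "n \<ge> 1"
  shows "(\<Sum>w\<in>P n. if hd w = n then f w else 0) = (\<Sum>w'\<in>P (n-1). f (n # w'))"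
proof -
  have "(\<Sum>w\<in>P n. if hd w = n then f w else 0) = (\<Sum>w\<in>{w\<in>P n. hd w = n}. f w)"
    by (simp add: sum.inter_filter)
  also have "{w\<in>P n. hd w = n} = (\<lambda>w'. n # w') ` P (n-1)"
  proof
    show "{w\<in>P n. hd w = n} \<subseteq> (\<lambda>w'. n # w') ` P (n-1)"
    proof
      fix w assume "w \<in> {w\<in>P n. hd w = n}"
      then have w: "w \<in> P n" and h: "hd w = n" by auto
      have sw: "set w = {1..n}" "distinct w" using w by (auto simp: permutations_of_set_def)
      then have "w \<noteq> []" using n by auto
      then have wc: "w = n # tl w" using h by (cases w) auto
      have "set (tl w) = {1..n} - {n}" using sw wc by (metis distinct.simps(2) list.set(2) Diff_insert_absorb)
      also have "\<dots> = {1..n-1}" using n by auto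
      finally have "tl w \<in> P (n-1)" using sw wc by (metis distinct.simps(2) permutations_of_setI)
      then show "w \<in> (\<lambda>w'. n # w') ` P (n-1)" using wc by blast
    qed
    show "(\<lambda>w'. n # w') ` P (n-1) \<subseteq> {w\<in>P n. hd w = n}"
    proof
      fix x assume "x \<in> (\<lambda>w'. n # w') ` P (n-1)"
      then obtain w' where w': "w' \<in> P (n-1)" and x: "x = n # w'" by auto
      have sw: "set w' = {1..n-1}" "distinct w'" using w' by (auto simp: permutations_of_set_def)
      have "set (n # w') = {1..n}" using sw n by auto
      moreover have "distinct (n # w')" using sw n by auto
      ultimately show "x \<in> {w\<in>P n. hd w = n}" using x by auto
    qed
  qed
  also have "(\<Sum>w\<in>(\<lambda>w'. n # w') ` P (n-1). f w) = (\<Sum>w'\<in>P (n-1). f (n # w'))"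
    by (subst sum.reindex) (auto intro: inj_onI)
  finally show ?thesis .
qed


definition sc :: "nat \<Rightarrow> nat \<Rightarrow> nat" where "sc n v = (if v < n then v + 1 else 1)"

lemma outdeg_eq:
  assumes n: "n \<ge> 1" and \<sigma>: "\<sigma> permutes {1..n}"
  shows "dfs_outdeg n (tour_mult n) (cycle_mult n) \<sigma>
    = (\<Sum>v\<in>{1..n}. if inv \<sigma> (sc n v) < inv \<sigma> v then 1 else 0)"
proof -
  define c where "c a = inv \<sigma> (sc n (\<sigma> a))" for a
  have mem: "x \<in> {1..n} \<Longrightarrow> \<sigma> x \<in> {1..n}" for x using permutes_in_image[OF \<sigma>] by blast
  have imem: "x \<in> {1..n} \<Longrightarrow> inv \<sigma> x \<in> {1..n}" for x
    using permutes_in_image[OF permutes_inv[OF \<sigma>]] by blast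
  have scmem: "v \<in> {1..n} \<Longrightarrow> sc n v \<in> {1..n}" for v using n by (auto simp: sc_def)
  have cyc: "u \<in> {1..n} \<Longrightarrow> cycle_mult n u v = (if v = sc n u then 1 else 0)" for u v
    by (auto simp: cycle_mult_def sc_def)
  have trm: "tour_mult n a b * cycle_mult n (\<sigma> a) (\<sigma> b) = (if b = c a then (if c a < a then 1 else 0) else 0)"
    if a: "a \<in> {1..n}" and b: "b \<in> {1..n}" for a b
  proof -
    have "\<sigma> b = sc n (\<sigma> a) \<longleftrightarrow> b = c a"
      unfolding c_def using permutes_inv_eq[OF \<sigma>] by metis
    then show ?thesis using a b cyc[OF mem[OF a]] by (auto simp: tour_mult_def)
  qed
  have "dfs_outdeg n (tour_mult n) (cycle_mult n) \<sigma>
      = (\<Sum>a\<in>{1..n}. \<Sum>b\<in>{1..n} - {a}. if b = c a then (if c a < a then 1 else 0) else 0)"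
    unfolding dfs_outdeg_def by (intro sum.cong refl) (auto simp: trm)
  also have "\<dots> = (\<Sum>a\<in>{1..n}. if c a < a then 1 else 0)"
  proof (rule sum.cong[OF refl])
    fix a assume a: "a \<in> {1..n}"
    have "c a \<in> {1..n}" unfolding c_def by (rule imem[OF scmem[OF mem[OF a]]])
    then show "(\<Sum>b\<in>{1..n} - {a}. if b = c a then (if c a < a then 1 else 0) else 0) = (if c a < a then 1 else 0)"
      by (subst sum.delta) auto
  qed
  also have "\<dots> = (\<Sum>v\<in>{1..n}. if c (inv \<sigma> v) < inv \<sigma> v then 1 else 0)"
    using sum.permute[OF permutes_inv[OF \<sigma>], of "\<lambda>a. if c a < a then 1 else 0"] by (simp add: o_def)
  also have "\<dots> = (\<Sum>v\<in>{1..n}. if inv \<sigma> (sc n v) < inv \<sigma> v then 1 else 0)"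
    unfolding c_def permutes_inverses(1)[OF \<sigma>] ..
  finally show ?thesis .
qed

lemma cdes_map:
  assumes n: "n \<ge> 1"
  shows "cdes (map \<pi> [1..<Suc n]) = (\<Sum>v\<in>{1..n}. if \<pi> (sc n v) < \<pi> v then 1 else 0)"
proof -
  define w where "w = map \<pi> [1..<Suc n]"
  have lw: "length (w @ [hd w]) = Suc n" by (simp add: w_def)
  have hw: "hd w = \<pi> 1" using n by (simp add: w_def hd_map upt_rec)
  have "cdes w = (\<Sum>i<n. if (w @ [hd w]) ! Suc i < (w @ [hd w]) ! i then 1 else 0)"
    unfolding cdes_def des_sum lw by simp
  also have "\<dots> = (\<Sum>i<n. if \<pi> (sc n (Suc i)) < \<pi> (Suc i) then 1 else 0)"
  proof (rule sum.cong[OF refl])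
    fix i assume i: "i \<in> {..<n}"
    have a: "(w @ [hd w]) ! i = \<pi> (Suc i)" using i by (simp add: w_def nth_append del: upt_Suc)
    have b: "(w @ [hd w]) ! Suc i = \<pi> (sc n (Suc i))"
    proof (cases "Suc i < n")
      case True then show ?thesis by (simp add: w_def nth_append sc_def del: upt_Suc)
    next
      case False then have "Suc i = n" using i by simp
      then show ?thesis using hw by (simp add: w_def nth_append sc_def del: upt_Suc)
    qed
    show "(if (w @ [hd w]) ! Suc i < (w @ [hd w]) ! i then 1 else 0) = (if \<pi> (sc n (Suc i)) < \<pi> (Suc i) then 1 else (0::nat))"
      unfolding a b ..
  qed
  also have "\<dots> = (\<Sum>v\<in>{1..n}. if \<pi> (sc n v) < \<pi> v then 1 else 0)"
    by (simp add: sum.atLeast1_atMost_eq)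
  finally show ?thesis by (simp add: w_def)
qed

lemma perm_list_bij: "bij_betw (\<lambda>\<pi>. map \<pi> [1..<Suc n]) {\<pi>. \<pi> permutes {1..n}} (P n)"
proof (rule bij_betw_imageI)
  show "inj_on (\<lambda>\<pi>. map \<pi> [1..<Suc n]) {\<pi>. \<pi> permutes {1..n}}"
  proof (rule inj_onI)
    fix p q assume p: "p \<in> {\<pi>. \<pi> permutes {1..n}}" and q: "q \<in> {\<pi>. \<pi> permutes {1..n}}"
      and eq: "map p [1..<Suc n] = map q [1..<Suc n]"
    show "p = q"
    proof
      fix x show "p x = q x"
      proof (cases "x \<in> {1..n}")
        case True then show ?thesis using eq by (simp add: map_eq_conv del: upt_Suc)
      next
        case False then show ?thesis using p q by (simp add: permutes_not_in)
      qed
    qed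
  qed
next
  show "(\<lambda>\<pi>. map \<pi> [1..<Suc n]) ` {\<pi>. \<pi> permutes {1..n}} = P n"
  proof
    show "(\<lambda>\<pi>. map \<pi> [1..<Suc n]) ` {\<pi>. \<pi> permutes {1..n}} \<subseteq> P n"
    proof
      fix w assume "w \<in> (\<lambda>\<pi>. map \<pi> [1..<Suc n]) ` {\<pi>. \<pi> permutes {1..n}}"
      then obtain p where p: "p permutes {1..n}" and w: "w = map p [1..<Suc n]" by auto
      have "set w = {1..n}" using permutes_image[OF p] w by (simp add: atLeastLessThanSuc_atLeastAtMost del: upt_Suc)
      moreover have "distinct w" using w permutes_inj_on[OF p] by (simp add: distinct_map del: upt_Suc)
      ultimately show "w \<in> P n" by auto
    qed
  next
    show "P n \<subseteq> (\<lambda>\<pi>. map \<pi> [1..<Suc n]) ` {\<pi>. \<pi> permutes {1..n}}"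
    proof
      fix w assume w: "w \<in> P n"
      have sw: "set w = {1..n}" "distinct w" using w by (auto simp: permutations_of_set_def)
      have lw: "length w = n" using w length_finite_permutations_of_set by fastforce
      define p where "p x = (if x \<in> {1..n} then w ! (x - 1) else x)" for x
      have mp: "map p [1..<Suc n] = w"
        by (rule nth_equalityI) (auto simp: lw p_def nth_map_upt simp del: upt_Suc)
      have "set (map p [1..<Suc n]) = {1..n}" "distinct (map p [1..<Suc n])"
        using mp sw by auto
      then have "p ` {1..n} = {1..n}" "inj_on p {1..n}"
        by (simp_all add: distinct_map atLeastLessThanSuc_atLeastAtMost del: upt_Suc)
      then have "bij_betw p {1..n} {1..n}" by (simp add: bij_betw_def)
      then have "p permutes {1..n}" by (rule bij_imp_permutes) (auto simp add: p_def)
      then show "w \<in> (\<lambda>\<pi>. map \<pi> [1..<Suc n]) ` {\<pi>. \<pi> permutes {1..n}}"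
        using mp by force
    qed
  qed
qed

lemma inv_bij: "bij_betw inv {\<pi>. \<pi> permutes A} {\<pi>. \<pi> permutes A}"
proof (rule bij_betw_imageI)
  show "inj_on inv {\<pi>. \<pi> permutes A}"
    by (rule inj_onI) (metis mem_Collect_eq permutes_inv_inv)
  show "inv ` {\<pi>. \<pi> permutes A} = {\<pi>. \<pi> permutes A}"
  proof
    show "inv ` {\<pi>. \<pi> permutes A} \<subseteq> {\<pi>. \<pi> permutes A}" by (auto intro: permutes_inv)
    show "{\<pi>. \<pi> permutes A} \<subseteq> inv ` {\<pi>. \<pi> permutes A}"
    proof
      fix p assume "p \<in> {\<pi>. \<pi> permutes A}"
      then have "p permutes A" by simp
      then show "p \<in> inv ` {\<pi>. \<pi> permutes A}"
        using permutes_inv_inv[of p A] permutes_inv[of p A] by (metis image_eqI mem_Collect_eq)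
    qed
  qed
qed

lemma ODP_eq:
  assumes n: "n \<ge> 1"
  shows "ODP n (tour_mult n) (cycle_mult n) = (\<Sum>w\<in>P n. fps_X ^ cdes w)"
proof -
  define h where "h \<pi> = (\<Sum>v\<in>{1..n}. if \<pi> (sc n v) < \<pi> v then 1 else 0::nat)" for \<pi> :: "nat \<Rightarrow> nat"
  have "ODP n (tour_mult n) (cycle_mult n) = (\<Sum>\<sigma>\<in>{\<sigma>. \<sigma> permutes {1..n}}. fps_X ^ h (inv \<sigma>))"
    unfolding ODP_def by (intro sum.cong refl) (simp add: outdeg_eq[OF n] h_def)
  also have "\<dots> = (\<Sum>\<pi>\<in>{\<sigma>. \<sigma> permutes {1..n}}. fps_X ^ h \<pi>)"
    by (rule sum.reindex_bij_betw[OF inv_bij])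
  also have "\<dots> = (\<Sum>\<pi>\<in>{\<sigma>. \<sigma> permutes {1..n}}. fps_X ^ cdes (map \<pi> [1..<Suc n]))"
    by (intro sum.cong refl) (simp only: cdes_map[OF n] h_def)
  also have "\<dots> = (\<Sum>w\<in>P n. fps_X ^ cdes w)"
    by (rule sum.reindex_bij_betw[OF perm_list_bij, of "\<lambda>w. fps_X ^ cdes w"])
  finally show ?thesis .
qed


lemma key:
  assumes n: "n \<ge> 1"
  shows "ODP n (tour_mult n) (cycle_mult n) = Abs_fps (\<lambda>m. of_nat n * of_nat m ^ (n - 1)) * (1 - fps_X) ^ n"
proof (cases "n = 1")
  case True
  have "ODP n (tour_mult n) (cycle_mult n) = 1"
  proof -
    have "ODP n (tour_mult n) (cycle_mult n) = (\<Sum>w\<in>P 1. fps_X ^ cdes w)" using ODP_eq[OF n] True by simp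
    also have "\<dots> = 1" by (simp add: cdes_def)
    finally show ?thesis .
  qed
  moreover have "Abs_fps (\<lambda>m. of_nat n * of_nat m ^ (n - 1)) = S 0"
    using True by (simp add: S_def)
  ultimately show ?thesis using True S_0 by (simp add: mult.commute)
next
  case False
  then obtain k where k: "n = Suc k" "k \<ge> 1" using n by (cases n) auto
  have "ODP n (tour_mult n) (cycle_mult n) = (\<Sum>w\<in>P n. fps_X ^ cdes w)"
    by (rule ODP_eq[OF n])
  also have "\<dots> = of_nat n * (\<Sum>w\<in>P n. if hd w = n then fps_X ^ cdes w else 0)"
    by (rule orbit[OF n]) (simp add: cdes_rotate)
  also have "\<dots> = of_nat n * (\<Sum>w'\<in>P k. fps_X ^ cdes (Suc k # w'))"
    using head_sum[OF n, of "\<lambda>w. fps_X ^ cdes w"] k by simp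
  also have "\<dots> = of_nat n * (\<Sum>w'\<in>P k. fps_X * fps_X ^ des w')"
    by (simp add: cdes_head[OF _ k(2)])
  also have "\<dots> = of_nat n * fps_X * E k"
    by (simp add: E_def sum_distrib_left mult.assoc)
  also have "\<dots> = of_nat n * fps_X * S k * (1 - fps_X) ^ n"
    using k by (simp add: E_eq mult_ac)
  also have "of_nat n * fps_X * S k = Abs_fps (\<lambda>m. of_nat n * of_nat m ^ (n - 1))"
  proof (rule fps_ext)
    fix m
    show "fps_nth (of_nat n * fps_X * S k) m = fps_nth (Abs_fps (\<lambda>m. of_nat n * of_nat m ^ (n - 1))) m"
      using k by (cases m) (simp_all add: S_def mult.assoc fps_of_nat[symmetric] del: of_nat_Suc)
  qed
  finally show ?thesis .
qed

theorem mainTheorem14: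
  fixes n :: nat
  assumes "n \<ge> 1"
  shows "ODP n (tour_mult n) (cycle_mult n) / (1 - fps_X) ^ n
           = Abs_fps (\<lambda>m. of_nat n * of_nat m ^ (n - 1))"
proof -
  have nz: "(1 - fps_X :: real fps) ^ n \<noteq> 0"
  proof -
    have "(1 - fps_X :: real fps) \<noteq> 0"
    proof
      assume "(1 - fps_X :: real fps) = 0"
      then have "fps_nth (1 - fps_X :: real fps) 0 = 0" by simp
      then show False by simp
    qed
    then show ?thesis by simp
  qed
  show ?thesis unfolding key[OF assms] using nz by simp
qed

end
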